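(* Let the MT pdf at time $t-1$ be a mixture over $n$-target hypotheses $q^{(n)}$, $$p_{t-1}(X,n)=\sum_{q^{(n)}}\omega^{q^{(n)}}_{t-1}\sum_\nu\prod_{i=1}^n p^{q^{(n)},i}_{t-1}(x_{\nu_i}),$$ and suppose no birth or death. Then (i) the predicted MT pdf $p_t^-(X,n)=\frac1{n!}\int p(X,n\mid X',n)p_{t-1}(X',n)dX'$ is $$p_t^-(X,n)=\sum_{q^{(n)}}\omega^{q^{(n)}}_{t-1}\sum_\nu\prod_{i}p_t^{q^{(n)},i-}(x_{\nu_i}),\qquad p_t^{q^{(n)},i-}(x)=\int p(x\mid x')p^{q^{(n)},i}_{t-1}(x')dx';$$ and (ii) given measurements $Z_t=\{z^t_1,\dots,z^t_m\}$, the Bayes-updated MT pdf $p_t(X,n\mid Z_t)=\frac{p(Z_t\mid X,n)p_t^-(X,n)}{\sum_q\frac1{q!}\int p(Z_t\mid X',q)p_t^-(X',q)dX'}$ equals $$p_t(X,n\mid Z_t)=\sum_{q^{(n)}}\sum_{\sigma^{(n)}}\omega_t^{q^{(n)}\sigma^{(n)}}\sum_\nu\prod_i p_t^{q^{(n)}\sigma^{(n)},i}\big(x_{\nu_i}\mid z^t_{\sigma^{(n)}_i}\big),$$ where $$p_t^{q^{(n)}\sigma^{(n)},i}(x\mid z)=\frac{p(z\mid x)\,p_t^{q^{(n)},i-}(x)}{\int p(z\mid x')\,p_t^{q^{(n)},i-}(x')dx'},$$ $$\omega_t^{q^{(n)}\sigma^{(n)}}=\frac{\omega^{q^{(n)}}_{t-1}\,p(\sigma^{(n)}\mid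 n)\,l_{q^{(n)}\sigma^{(n)}}}{\sum_q\sum_{r^{(q)}}\sum_{\nu^{(q)}}\omega^{r^{(q)}}_{t-1}\,p(\nu^{(q)}\mid q)\,l_{r^{(q)}\nu^{(q)}}},\qquad l_{q^{(n)}\sigma^{(n)}}=\frac{k!}{V^k}\prod_i\int p(z^t_{\sigma^{(n)}_i}\mid x)\,p_t^{q^{(n)},i-}(x)dx,$$ $k$ being the number of measurements assigned to clutter by $\sigma^{(n)}$, and the denominator summing over all cardinalities $q$, all prior $q$-target hypotheses $r^{(q)}$ and all $q$-target data associations $\nu^{(q)}$.
   Context: A multi-target (MT) pdf is a function $p(X,n)$ of a cardinality $n$ and an unordered collection $X=\{x_1,\dots,x_n\}$ of points in $\mathbb{R}^d$; $\sum_\nu$ is the sum over all permutations $\nu$ of $\{1,\dots,n\}$; the integral over $n$-element collections is $\frac{1}{n!}\int\cdot\,dx_1\cdots dx_n$. Single-target transition density $p(x\mid x')$; without birth or death the MT transition density is $p(X,n\mid X',n)=\sum_\nu\prod_{i=1}^n p(x_{\nu_i}\mid x'_i)$. Single-target likelihood $p(z\mid x)$. Given measurements $Z=\{z_1,\dots,z_m\}$, a data association hypothesis for $n$ targets is $\sigma^{(n)}=(\sigma^{(n)}_1,\dots,\sigma^{(n)}_n)$ with $\sigma^{(n)}_i\in\{z_1,\dots,z_m,\phi\}$, each measurement assigned to at most one target ($\phi$ = missed detection); the $k$ measurements not assigned to any target are clutter. Convention: $p(\phi\mid x)=1$ (so updating with $\phi$ leaves a pdf unchanged). The MT likelihood is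 $p(Z\mid X,n)=\sum_{\sigma^{(n)}}p(Z\mid\sigma^{(n)},X,n)\,p(\sigma^{(n)}\mid n)$ with $p(\sigma^{(n)}\mid n)=p_D^{m-k}(1-p_D)^{n-(m-k)}e^{-\lambda V}\frac{(\lambda V)^k}{k!}$ (detection probability $p_D$, Poisson clutter of rate $\lambda$ uniform on sensor volume $V$) and $p(Z\mid\sigma^{(n)},X,n)=\frac{k!}{V^k}\prod_{i=1}^n p(z_{\sigma^{(n)}_i}\mid x_i)$. *)

theory Defs
  imports "HOL-Probability.Probability"
begin

text \<open>An n-target state X = {x_1,...,x_n} is represented by an (ordered) tuple
  X :: nat => 'a, of which only the entries X 0, ..., X (n-1) are relevant;
  all MT quantities below are symmetric in these entries.\<close>

definition perms :: "nat \<Rightarrow> (nat \<Rightarrow> nat) set" where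
  "perms n = {\<nu>. \<nu> permutes {..<n}}"

definition mt_integral :: "nat \<Rightarrow> ((nat \<Rightarrow> 'a::euclidean_space) \<Rightarrow> real) \<Rightarrow> real" where
  "mt_integral n F = (\<integral>X. F X \<partial>(PiM {..<n} (\<lambda>_. lborel))) / fact n"

definition mt_mix :: "(nat \<Rightarrow> 'h set) \<Rightarrow> (nat \<Rightarrow> 'h \<Rightarrow> real)
      \<Rightarrow> (nat \<Rightarrow> 'h \<Rightarrow> nat \<Rightarrow> 'a \<Rightarrow> real) \<Rightarrow> nat \<Rightarrow> (nat \<Rightarrow> 'a) \<Rightarrow> real" where
  "mt_mix H w p n X = (\<Sum>q\<in>H n. w n q * (\<Sum>\<nu>\<in>perms n. \<Prod>i<n. p n q i (X (\<nu> i))))"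

text \<open>MT transition density without birth/death: p(X,n|X',n) = sum_nu prod_i p(x_{nu_i}|x'_i).
  Single-target transition density: tr x x' = p(x|x').\<close>
definition mt_trans :: "('a \<Rightarrow> 'a \<Rightarrow> real) \<Rightarrow> nat \<Rightarrow> (nat \<Rightarrow> 'a) \<Rightarrow> (nat \<Rightarrow> 'a) \<Rightarrow> real" where
  "mt_trans tr n X X' = (\<Sum>\<nu>\<in>perms n. \<Prod>i<n. tr (X (\<nu> i)) (X' i))"

definition mt_predict :: "('a::euclidean_space \<Rightarrow> 'a \<Rightarrow> real) \<Rightarrow> (nat \<Rightarrow> (nat \<Rightarrow> 'a) \<Rightarrow> real)
      \<Rightarrow> nat \<Rightarrow> (nat \<Rightarrow> 'a) \<Rightarrow> real" where
  "mt_predict tr p n X = mt_integral n (\<lambda>X'. mt_trans tr n X X' * p n X')"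

definition st_predict :: "('a::euclidean_space \<Rightarrow> 'a \<Rightarrow> real) \<Rightarrow> ('a \<Rightarrow> real) \<Rightarrow> 'a \<Rightarrow> real" where
  "st_predict tr p x = (\<integral>x'. tr x x' * p x' \<partial>lborel)"

text \<open>Data association hypotheses for n targets and measurements z_0..z_{m-1}:
  sigma i = Some j means target i is assigned measurement z_j, sigma i = None means
  missed detection (phi); each measurement is used at most once; sigma i = None for i >= n.\<close>
definition assocs :: "nat \<Rightarrow> nat \<Rightarrow> (nat \<Rightarrow> nat option) set" where
  "assocs m n = {\<sigma>. (\<forall>i. n \<le> i \<longrightarrow> \<sigma> i = None)
                  \<and> (\<forall>i<n. \<forall>j. \<sigma> i = Some j \<longrightarrow> j < m)
                  \<and> (\<forall>i<n. \<forall>i'<n. \<sigma> i = \<sigma> i' \<and> \<sigma> i \<noteq> None \<longrightarrow> i = i')}"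

definition n_clutter :: "nat \<Rightarrow> nat \<Rightarrow> (nat \<Rightarrow> nat option) \<Rightarrow> nat" where
  "n_clutter m n \<sigma> = m - card {i. i < n \<and> \<sigma> i \<noteq> None}"

definition assoc_prob :: "real \<Rightarrow> real \<Rightarrow> real \<Rightarrow> nat \<Rightarrow> nat \<Rightarrow> (nat \<Rightarrow> nat option) \<Rightarrow> real" where
  "assoc_prob pD lam V m n \<sigma> = (let k = n_clutter m n \<sigma> in
     pD ^ (m - k) * (1 - pD) ^ (n - (m - k)) * exp (- lam * V) * (lam * V) ^ k / fact k)"

text \<open>Single-target likelihood of an assignment, with the convention p(phi|x) = 1.
  g zeta x = p(zeta|x).\<close>
definition meas_lik :: "('b \<Rightarrow> 'a \<Rightarrow> real) \<Rightarrow> (nat \<Rightarrow> 'b) \<Rightarrow> nat option \<Rightarrow> 'a \<Rightarrow> real" where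
  "meas_lik g z zo x = (case zo of None \<Rightarrow> 1 | Some j \<Rightarrow> g (z j) x)"

definition assoc_lik :: "real \<Rightarrow> ('b \<Rightarrow> 'a \<Rightarrow> real) \<Rightarrow> (nat \<Rightarrow> 'b) \<Rightarrow> nat \<Rightarrow> nat
      \<Rightarrow> (nat \<Rightarrow> nat option) \<Rightarrow> (nat \<Rightarrow> 'a) \<Rightarrow> real" where
  "assoc_lik V g z m n \<sigma> X = (let k = n_clutter m n \<sigma> in
     fact k / V ^ k * (\<Prod>i<n. meas_lik g z (\<sigma> i) (X i)))"

definition mt_lik :: "real \<Rightarrow> real \<Rightarrow> real \<Rightarrow> ('b \<Rightarrow> 'a \<Rightarrow> real) \<Rightarrow> (nat \<Rightarrow> 'b) \<Rightarrow> nat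
      \<Rightarrow> nat \<Rightarrow> (nat \<Rightarrow> 'a) \<Rightarrow> real" where
  "mt_lik pD lam V g z m n X =
     (\<Sum>\<sigma>\<in>assocs m n. assoc_lik V g z m n \<sigma> X * assoc_prob pD lam V m n \<sigma>)"

definition mt_bayes :: "(nat \<Rightarrow> (nat \<Rightarrow> 'a::euclidean_space) \<Rightarrow> real)
      \<Rightarrow> (nat \<Rightarrow> (nat \<Rightarrow> 'a) \<Rightarrow> real) \<Rightarrow> nat \<Rightarrow> (nat \<Rightarrow> 'a) \<Rightarrow> real" where
  "mt_bayes lik p n X = lik n X * p n X / (\<Sum>q. mt_integral q (\<lambda>X'. lik q X' * p q X'))"

definition st_update :: "('b \<Rightarrow> 'a::euclidean_space \<Rightarrow> real) \<Rightarrow> (nat \<Rightarrow> 'b) \<Rightarrow> nat option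
      \<Rightarrow> ('a \<Rightarrow> real) \<Rightarrow> 'a \<Rightarrow> real" where
  "st_update g z zo p x = meas_lik g z zo x * p x / (\<integral>x'. meas_lik g z zo x' * p x' \<partial>lborel)"

definition assoc_lweight :: "real \<Rightarrow> ('b \<Rightarrow> 'a::euclidean_space \<Rightarrow> real) \<Rightarrow> (nat \<Rightarrow> 'b) \<Rightarrow> nat
      \<Rightarrow> nat \<Rightarrow> (nat \<Rightarrow> nat option) \<Rightarrow> (nat \<Rightarrow> 'a \<Rightarrow> real) \<Rightarrow> real" where
  "assoc_lweight V g z m n \<sigma> p = (let k = n_clutter m n \<sigma> in
     fact k / V ^ k * (\<Prod>i<n. \<integral>x. meas_lik g z (\<sigma> i) x * p i x \<partial>lborel))"

end

theory Submission
  imports Defs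
begin

lemma pi_prod_int:
  fixes h :: "nat \<Rightarrow> 'a::euclidean_space \<Rightarrow> real"
  assumes "\<And>i. i < n \<Longrightarrow> integrable lborel (h i)"
  shows "integrable (PiM {..<n} (\<lambda>_. lborel)) (\<lambda>X. \<Prod>i<n. h i (X i))"
    and "(\<integral>X. (\<Prod>i<n. h i (X i)) \<partial>PiM {..<n} (\<lambda>_. lborel)) = (\<Prod>i<n. integral\<^sup>L lborel (h i))"
proof -
  interpret product_sigma_finite "\<lambda>_::nat. (lborel::'a measure)"
    by standard
  show "integrable (PiM {..<n} (\<lambda>_. lborel)) (\<lambda>X. \<Prod>i<n. h i (X i))"
    by (rule product_integrable_prod) (use assms in auto)
  show "(\<integral>X. (\<Prod>i<n. h i (X i)) \<partial>PiM {..<n} (\<lambda>_. lborel)) = (\<Prod>i<n. integral\<^sup>L lborel (h i))"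
    by (rule product_integral_prod) (use assms in auto)
qed

lemma perm_prod:
  assumes "\<nu> permutes {..<n}"
  shows "(\<Prod>i<n. h i (Y (\<nu> i))) = (\<Prod>i<n. h (inv \<nu> i) (Y i))"
proof -
  have "(\<Prod>i<n. h (inv \<nu> i) (Y i)) = (\<Prod>i<n. h (inv \<nu> (\<nu> i)) (Y (\<nu> i)))"
    using prod.permute[OF assms, of "\<lambda>i. h (inv \<nu> i) (Y i)"] by (simp add: o_def)
  also have "\<dots> = (\<Prod>i<n. h i (Y (\<nu> i)))"
    using permutes_inverses(2)[OF assms] by simp
  finally show ?thesis by simp
qed

lemma assoc_comp:
  assumes "\<nu> permutes {..<n}" "\<sigma> \<in> assocs m n"
  shows "\<sigma> \<circ> \<nu> \<in> assocs m n" "n_clutter m n (\<sigma> \<circ> \<nu>) = n_clutter m n \<sigma>"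
proof -
  have out: "\<And>i. n \<le> i \<Longrightarrow> \<nu> i = i" using assms(1) unfolding permutes_def by auto
  have inr: "\<And>i. i < n \<Longrightarrow> \<nu> i < n" using permutes_in_image[OF assms(1)] by auto
  have inj: "inj \<nu>" using permutes_inj[OF assms(1)] .
  have s1: "\<forall>i. n \<le> i \<longrightarrow> \<sigma> i = None" and s2: "\<forall>i<n. \<forall>j. \<sigma> i = Some j \<longrightarrow> j < m"
    and s3: "\<forall>i<n. \<forall>i'<n. \<sigma> i = \<sigma> i' \<and> \<sigma> i \<noteq> None \<longrightarrow> i = i'"
    using assms(2) unfolding assocs_def by blast+
  have t1: "\<forall>i. n \<le> i \<longrightarrow> (\<sigma> \<circ> \<nu>) i = None"
    using s1 out by simp
  have t2: "\<forall>i<n. \<forall>j. (\<sigma> \<circ> \<nu>) i = Some j \<longrightarrow> j < m"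
  proof (intro allI impI)
    fix i j assume "i < n" "(\<sigma> \<circ> \<nu>) i = Some j"
    then show "j < m" using s2 inr[of i] by auto
  qed
  have t3: "\<forall>i<n. \<forall>i'<n. (\<sigma> \<circ> \<nu>) i = (\<sigma> \<circ> \<nu>) i' \<and> (\<sigma> \<circ> \<nu>) i \<noteq> None \<longrightarrow> i = i'"
  proof (intro allI impI)
    fix i i' assume h: "i < n" "i' < n" "(\<sigma> \<circ> \<nu>) i = (\<sigma> \<circ> \<nu>) i' \<and> (\<sigma> \<circ> \<nu>) i \<noteq> None"
    have "\<sigma> (\<nu> i) = \<sigma> (\<nu> i') \<and> \<sigma> (\<nu> i) \<noteq> None" using h(3) by (metis comp_apply)
    then have "\<nu> i = \<nu> i'" using s3 inr[OF h(1)] inr[OF h(2)] by blast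
    then show "i = i'" using inj by (simp add: inj_eq)
  qed
  show "\<sigma> \<circ> \<nu> \<in> assocs m n" unfolding assocs_def using t1 t2 t3 by blast
  have "{i. i < n \<and> (\<sigma> \<circ> \<nu>) i \<noteq> None} = inv \<nu> ` {i. i < n \<and> \<sigma> i \<noteq> None}"
  proof (intro set_eqI iffI)
    fix i assume "i \<in> {i. i < n \<and> (\<sigma> \<circ> \<nu>) i \<noteq> None}"
    then show "i \<in> inv \<nu> ` {i. i < n \<and> \<sigma> i \<noteq> None}"
      using inr permutes_inverses(2)[OF assms(1)] by (auto intro!: image_eqI[of _ _ "\<nu> i"])
  next
    fix i assume "i \<in> inv \<nu> ` {i. i < n \<and> \<sigma> i \<noteq> None}"
    then obtain j where "i = inv \<nu> j" "j < n" "\<sigma> j \<noteq> None" by auto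
    moreover have "inv \<nu> j < n" using permutes_in_image[OF permutes_inv[OF assms(1)]] \<open>j<n\<close> by auto
    ultimately show "i \<in> {i. i < n \<and> (\<sigma> \<circ> \<nu>) i \<noteq> None}"
      using permutes_inverses(1)[OF assms(1)] by auto
  qed
  moreover have "inj (inv \<nu>)" using permutes_inj[OF permutes_inv[OF assms(1)]] .
  ultimately show "n_clutter m n (\<sigma> \<circ> \<nu>) = n_clutter m n \<sigma>"
    unfolding n_clutter_def by (simp add: card_image inj_on_subset)
qed

lemma assoc_sum_comp:
  assumes "\<nu> permutes {..<n}"
  shows "(\<Sum>\<sigma>\<in>assocs m n. F (\<sigma> \<circ> \<nu>)) = (\<Sum>\<sigma>\<in>assocs m n. F \<sigma>)"
proof (rule sum.reindex_bij_betw)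
  have iv: "inv \<nu> permutes {..<n}" using permutes_inv[OF assms] .
  show "bij_betw (\<lambda>\<sigma>. \<sigma> \<circ> \<nu>) (assocs m n) (assocs m n)"
  proof (rule bij_betwI[where g = "\<lambda>\<sigma>. \<sigma> \<circ> inv \<nu>"])
    show "(\<lambda>\<sigma>. \<sigma> \<circ> \<nu>) \<in> assocs m n \<rightarrow> assocs m n" using assoc_comp(1)[OF assms] by auto
    show "(\<lambda>\<sigma>. \<sigma> \<circ> inv \<nu>) \<in> assocs m n \<rightarrow> assocs m n" using assoc_comp(1)[OF iv] by auto
    show "\<And>x. x \<in> assocs m n \<Longrightarrow> x \<circ> \<nu> \<circ> inv \<nu> = x"
      using permutes_inverses(1)[OF assms] by (auto simp: fun_eq_iff)
    show "\<And>x. x \<in> assocs m n \<Longrightarrow> x \<circ> inv \<nu> \<circ> \<nu> = x"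
      using permutes_inverses(2)[OF assms] by (auto simp: fun_eq_iff)
  qed
qed

lemma pred_facts:
  fixes tr :: "'a::euclidean_space \<Rightarrow> 'a \<Rightarrow> real" and f :: "'a \<Rightarrow> real"
  assumes f_meas: "f \<in> borel_measurable lborel"
    and f_nonneg: "\<And>x. 0 \<le> f x"
    and f_int: "integrable lborel f"
    and f_one: "(\<integral>x. f x \<partial>lborel) = 1"
    and tr_meas: "(\<lambda>(x, x'). tr x x') \<in> borel_measurable (lborel \<Otimes>\<^sub>M lborel)"
    and tr_nonneg: "\<And>x x'. 0 \<le> tr x x'"
    and tr_int: "\<And>x'. integrable lborel (\<lambda>x. tr x x')"
    and tr_one: "\<And>x'. (\<integral>x. tr x x' \<partial>lborel) = 1"
    and pred_int: "\<And>x. integrable lborel (\<lambda>x'. tr x x' * f x')"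
  shows "st_predict tr f \<in> borel_measurable lborel"
    and "\<And>x. 0 \<le> st_predict tr f x"
    and "integrable lborel (st_predict tr f)"
    and "(\<integral>x. st_predict tr f x \<partial>lborel) = 1"
proof -
  have jm: "(\<lambda>(x, x'). tr x x' * f x') \<in> borel_measurable (lborel \<Otimes>\<^sub>M lborel)"
    using tr_meas f_meas by measurable
  show pm: "st_predict tr f \<in> borel_measurable lborel"
    unfolding st_predict_def
    by (rule lborel.borel_measurable_lebesgue_integral) (use jm in simp)
  show pn: "\<And>x. 0 \<le> st_predict tr f x"
    unfolding st_predict_def by (intro Bochner_Integration.integral_nonneg) (simp add: tr_nonneg f_nonneg)
  have e: "ennreal (st_predict tr f x) = (\<integral>\<^sup>+x'. ennreal (tr x x' * f x') \<partial>lborel)" for x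
    unfolding st_predict_def
    by (rule nn_integral_eq_integral[symmetric]) (use pred_int tr_nonneg f_nonneg in auto)
  have jm2: "case_prod (\<lambda>x x'. ennreal (tr x x' * f x')) \<in> borel_measurable (lborel \<Otimes>\<^sub>M lborel)"
    using jm by (simp add: split_beta')
  have trm: "(\<lambda>x. tr x x') \<in> borel_measurable lborel" for x'
    using tr_meas by measurable
  have trm2[measurable]: "(\<lambda>x. tr x x') \<in> borel_measurable borel" for x'
    using trm[of x'] by simp
  have tr1: "(\<integral>\<^sup>+x. ennreal (tr x x') \<partial>lborel) = 1" for x'
    using nn_integral_eq_integral[OF tr_int, of x'] tr_nonneg tr_one by simp
  have f1: "(\<integral>\<^sup>+x. ennreal (f x) \<partial>lborel) = 1"
    using nn_integral_eq_integral[OF f_int] f_nonneg f_one by simp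
  have "(\<integral>\<^sup>+x. ennreal (st_predict tr f x) \<partial>lborel)
      = (\<integral>\<^sup>+x. (\<integral>\<^sup>+x'. ennreal (tr x x' * f x') \<partial>lborel) \<partial>lborel)"
    by (simp add: e)
  also have "\<dots> = (\<integral>\<^sup>+x'. (\<integral>\<^sup>+x. ennreal (tr x x' * f x') \<partial>lborel) \<partial>lborel)"
    by (rule lborel_pair.Fubini'[OF jm2, symmetric])
  also have "\<dots> = (\<integral>\<^sup>+x'. ennreal (f x') * (\<integral>\<^sup>+x. ennreal (tr x x') \<partial>lborel) \<partial>lborel)"
    apply (intro nn_integral_cong)
    apply (simp add: ennreal_mult tr_nonneg f_nonneg)
    apply (subst nn_integral_multc)
     apply measurable
    apply (simp add: mult.commute)
    done
  also have "\<dots> = 1" by (simp add: tr1 f1)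
  finally have nn: "(\<integral>\<^sup>+x. ennreal (st_predict tr f x) \<partial>lborel) = 1" .
  show "integrable lborel (st_predict tr f)"
    by (rule integrableI_nonneg) (use pm pn nn in auto)
  show "(\<integral>x. st_predict tr f x \<partial>lborel) = 1"
    by (subst integral_eq_nn_integral) (use pm pn nn in auto)
qed


lemma card_perms: "card (perms n) = fact n"
  unfolding perms_def by (rule card_permutations) auto

lemma part1:
  fixes f :: "nat \<Rightarrow> 'h \<Rightarrow> nat \<Rightarrow> 'a::euclidean_space \<Rightarrow> real"
  assumes pred_int: "\<And>n q i x. integrable lborel (\<lambda>x'. tr x x' * f n q i x')"
  shows "mt_predict tr (mt_mix H w f) n X = mt_mix H w (\<lambda>n q i. st_predict tr (f n q i)) n X"
proof -
  let ?M = "PiM {..<n} (\<lambda>_. lborel :: 'a measure)"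
  let ?P = "\<lambda>q i. st_predict tr (f n q i)"
  let ?T = "\<lambda>\<nu> q \<mu> X'. \<Prod>i<n. tr (X (\<nu> i)) (X' i) * f n q (inv \<mu> i) (X' i)"
  have expand: "mt_trans tr n X X' * mt_mix H w f n X'
     = (\<Sum>q\<in>H n. \<Sum>\<mu>\<in>perms n. \<Sum>\<nu>\<in>perms n. w n q * ?T \<nu> q \<mu> X')" for X'
  proof -
    have "mt_trans tr n X X' * mt_mix H w f n X'
      = (\<Sum>q\<in>H n. \<Sum>\<mu>\<in>perms n. \<Sum>\<nu>\<in>perms n. w n q * ((\<Prod>i<n. tr (X (\<nu> i)) (X' i)) * (\<Prod>i<n. f n q i (X' (\<mu> i)))))"
      unfolding mt_trans_def mt_mix_def by (simp add: sum_distrib_left sum_distrib_right mult_ac)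
    also have "\<dots> = (\<Sum>q\<in>H n. \<Sum>\<mu>\<in>perms n. \<Sum>\<nu>\<in>perms n. w n q * ?T \<nu> q \<mu> X')"
    proof (intro sum.cong refl)
      fix \<nu> q \<mu> assume "\<mu> \<in> perms n"
      then have mp: "\<mu> permutes {..<n}" by (simp add: perms_def)
      show "w n q * ((\<Prod>i<n. tr (X (\<nu> i)) (X' i)) * (\<Prod>i<n. f n q i (X' (\<mu> i)))) = w n q * ?T \<nu> q \<mu> X'"
        by (simp add: perm_prod[OF mp, of "\<lambda>i y. f n q i y" X'] prod.distrib)
    qed
    finally show ?thesis .
  qed
  have Ti: "integrable ?M (?T \<nu> q \<mu>)" for \<nu> q \<mu>
    by (rule pi_prod_int(1)) (rule pred_int)
  have Tv: "(\<integral>X'. ?T \<nu> q \<mu> X' \<partial>?M) = (\<Prod>i<n. ?P q (inv \<mu> i) (X (\<nu> i)))" for \<nu> q \<mu>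
    by (subst pi_prod_int(2)) (auto simp: pred_int st_predict_def)
  have "(\<integral>X'. mt_trans tr n X X' * mt_mix H w f n X' \<partial>?M)
      = (\<Sum>q\<in>H n. \<Sum>\<mu>\<in>perms n. \<Sum>\<nu>\<in>perms n. w n q * (\<Prod>i<n. ?P q (inv \<mu> i) (X (\<nu> i))))"
    unfolding expand
    by (simp add: integral_sum Ti Tv)
  also have "\<dots> = (\<Sum>q\<in>H n. \<Sum>\<mu>\<in>perms n. \<Sum>\<nu>\<in>perms n. w n q * (\<Prod>i<n. ?P q i (X ((\<nu> \<circ> \<mu>) i))))"
  proof (intro sum.cong refl)
    fix \<nu> q \<mu> assume "\<mu> \<in> perms n"
    then have mp: "\<mu> permutes {..<n}" by (simp add: perms_def)
    show "w n q * (\<Prod>i<n. ?P q (inv \<mu> i) (X (\<nu> i))) = w n q * (\<Prod>i<n. ?P q i (X ((\<nu> \<circ> \<mu>) i)))"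
      using perm_prod[OF mp, of "\<lambda>i y. ?P q i y" "X \<circ> \<nu>"] by simp
  qed
  also have "\<dots> = (\<Sum>q\<in>H n. w n q * (\<Sum>\<mu>\<in>perms n. \<Sum>\<nu>\<in>perms n. (\<Prod>i<n. ?P q i (X ((\<nu> \<circ> \<mu>) i)))))"
    by (simp add: sum_distrib_left)
  also have "\<dots> = (\<Sum>q\<in>H n. w n q * (\<Sum>\<mu>\<in>perms n. \<Sum>\<nu>\<in>perms n. (\<Prod>i<n. ?P q i (X (\<nu> i)))))"
  proof (rule sum.cong[OF refl])
    fix q assume "q \<in> H n"
    have "(\<Sum>\<nu>\<in>perms n. \<Prod>i<n. ?P q i (X ((\<nu> \<circ> \<mu>) i))) = (\<Sum>\<nu>\<in>perms n. \<Prod>i<n. ?P q i (X (\<nu> i)))"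
      if "\<mu> \<in> perms n" for \<mu>
    proof -
      have mp: "\<mu> permutes {..<n}" using that by (simp add: perms_def)
      show ?thesis
        using sum_permutations_compose_right[OF mp, of "\<lambda>\<nu>. \<Prod>i<n. ?P q i (X (\<nu> i))"]
        by (simp add: perms_def)
    qed
    then show "w n q * (\<Sum>\<mu>\<in>perms n. \<Sum>\<nu>\<in>perms n. (\<Prod>i<n. ?P q i (X ((\<nu> \<circ> \<mu>) i))))
       = w n q * (\<Sum>\<mu>\<in>perms n. \<Sum>\<nu>\<in>perms n. (\<Prod>i<n. ?P q i (X (\<nu> i))))"
      by (metis (no_types, lifting) sum.cong)
  qed
  also have "\<dots> = fact n * mt_mix H w (\<lambda>n q i. st_predict tr (f n q i)) n X"
    by (simp add: mt_mix_def card_perms sum_distrib_left mult_ac)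
  finally show ?thesis
    unfolding mt_predict_def mt_integral_def by simp
qed


lemma integral_sum3:
  fixes F :: "'i \<Rightarrow> 'j \<Rightarrow> 'k \<Rightarrow> 'x \<Rightarrow> real"
  assumes "\<And>a b c. a \<in> A \<Longrightarrow> b \<in> B \<Longrightarrow> c \<in> C \<Longrightarrow> integrable M (F a b c)"
  shows "(\<integral>x. (\<Sum>a\<in>A. \<Sum>b\<in>B. \<Sum>c\<in>C. k a b c * F a b c x) \<partial>M)
       = (\<Sum>a\<in>A. \<Sum>b\<in>B. \<Sum>c\<in>C. k a b c * integral\<^sup>L M (F a b c))"
proof -
  have "(\<integral>x. (\<Sum>a\<in>A. \<Sum>b\<in>B. \<Sum>c\<in>C. k a b c * F a b c x) \<partial>M)
      = (\<Sum>a\<in>A. \<integral>x. (\<Sum>b\<in>B. \<Sum>c\<in>C. k a b c * F a b c x) \<partial>M)"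
    by (rule Bochner_Integration.integral_sum[where I=A and f="\<lambda>a x. \<Sum>b\<in>B. \<Sum>c\<in>C. k a b c * F a b c x"]) (auto intro!: integrable_sum integrable_mult_right assms)
  also have "\<dots> = (\<Sum>a\<in>A. \<Sum>b\<in>B. \<integral>x. (\<Sum>c\<in>C. k a b c * F a b c x) \<partial>M)"
    by (rule sum.cong[OF refl], rule Bochner_Integration.integral_sum[where I=B and f="\<lambda>b x. \<Sum>c\<in>C. k _ b c * F _ b c x"]) (auto intro!: integrable_sum integrable_mult_right assms)
  also have "\<dots> = (\<Sum>a\<in>A. \<Sum>b\<in>B. \<Sum>c\<in>C. \<integral>x. k a b c * F a b c x \<partial>M)"
    by (rule sum.cong[OF refl], rule sum.cong[OF refl], rule Bochner_Integration.integral_sum[where I=C and f="\<lambda>c x. k _ _ c * F _ _ c x"]) (auto intro!: integrable_mult_right assms)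
  also have "\<dots> = (\<Sum>a\<in>A. \<Sum>b\<in>B. \<Sum>c\<in>C. k a b c * integral\<^sup>L M (F a b c))"
    by simp
  finally show ?thesis .
qed

theorem proposition3:
  fixes H :: "nat \<Rightarrow> 'h set"
    and w :: "nat \<Rightarrow> 'h \<Rightarrow> real"
    and f :: "nat \<Rightarrow> 'h \<Rightarrow> nat \<Rightarrow> 'a::euclidean_space \<Rightarrow> real"
    and tr :: "'a \<Rightarrow> 'a \<Rightarrow> real"
    and g :: "'b \<Rightarrow> 'a \<Rightarrow> real"
    and z :: "nat \<Rightarrow> 'b"
    and m :: nat
    and pD lam V :: real
  assumes H_fin: "\<And>n. finite (H n)"
    and w_nonneg: "\<And>n q. q \<in> H n \<Longrightarrow> 0 \<le> w n q"
    and w_sums: "(\<lambda>n. \<Sum>q\<in>H n. w n q) sums 1"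
    and f_meas: "\<And>n q i. f n q i \<in> borel_measurable lborel"
    and f_nonneg: "\<And>n q i x. 0 \<le> f n q i x"
    and f_int: "\<And>n q i. integrable lborel (f n q i)"
    and f_one: "\<And>n q i. (\<integral>x. f n q i x \<partial>lborel) = 1"
    and tr_meas: "(\<lambda>(x, x'). tr x x') \<in> borel_measurable (lborel \<Otimes>\<^sub>M lborel)"
    and tr_nonneg: "\<And>x x'. 0 \<le> tr x x'"
    and tr_int: "\<And>x'. integrable lborel (\<lambda>x. tr x x')"
    and tr_one: "\<And>x'. (\<integral>x. tr x x' \<partial>lborel) = 1"
    and pred_int: "\<And>n q i x. integrable lborel (\<lambda>x'. tr x x' * f n q i x')"
    and g_meas: "\<And>\<zeta>. g \<zeta> \<in> borel_measurable lborel"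
    and g_nonneg: "\<And>\<zeta> x. 0 \<le> g \<zeta> x"
    and upd_int: "\<And>n q i j. q \<in> H n \<Longrightarrow> i < n \<Longrightarrow> j < m \<Longrightarrow>
        integrable lborel (\<lambda>x. g (z j) x * st_predict tr (f n q i) x)"
    and upd_pos: "\<And>n q i j. q \<in> H n \<Longrightarrow> i < n \<Longrightarrow> j < m \<Longrightarrow>
        0 < (\<integral>x. g (z j) x * st_predict tr (f n q i) x \<partial>lborel)"
    and pD: "0 \<le> pD" "pD \<le> 1"
    and lam: "0 < lam"
    and V: "0 < V"
  shows
    "(\<forall>n X. mt_predict tr (mt_mix H w f) n X
            = mt_mix H w (\<lambda>n q i. st_predict tr (f n q i)) n X)
     \<and> (\<forall>n X. mt_bayes (mt_lik pD lam V g z m) (mt_predict tr (mt_mix H w f)) n X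
            = (\<Sum>q\<in>H n. \<Sum>\<sigma>\<in>assocs m n.
                 (w n q * assoc_prob pD lam V m n \<sigma>
                    * assoc_lweight V g z m n \<sigma> (\<lambda>i. st_predict tr (f n q i))
                  / (\<Sum>n'. \<Sum>r\<in>H n'. \<Sum>\<nu>\<in>assocs m n'.
                       w n' r * assoc_prob pD lam V m n' \<nu>
                         * assoc_lweight V g z m n' \<nu> (\<lambda>i. st_predict tr (f n' r i))))
                 * (\<Sum>\<nu>\<in>perms n. \<Prod>i<n.
                      st_update g z (\<sigma> i) (st_predict tr (f n q i)) (X (\<nu> i)))))"
proof -
  define P where "P = (\<lambda>n q i. st_predict tr (f n q i))"
  have Pl: "\<And>n q. (\<lambda>i. st_predict tr (f n q i)) = P n q" by (simp add: P_def)
  have Pf: "P n q i \<in> borel_measurable lborel" "\<And>x. 0 \<le> P n q i x"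
    "integrable lborel (P n q i)" "(\<integral>x. P n q i x \<partial>lborel) = 1" for n q i
    unfolding P_def using pred_facts[OF f_meas f_nonneg f_int f_one tr_meas tr_nonneg tr_int tr_one pred_int]
    by auto
  have p1: "mt_predict tr (mt_mix H w f) n X = mt_mix H w P n X" for n X
    unfolding P_def by (rule part1) (rule pred_int)
  have pred_eq: "mt_predict tr (mt_mix H w f) = mt_mix H w P"
    by (intro ext) (rule p1)
  define KK where "KK n \<sigma> = fact (n_clutter m n \<sigma>) / V ^ n_clutter m n \<sigma> * assoc_prob pD lam V m n \<sigma>" for n \<sigma>
  define h where "h = (\<lambda>n r i zo. (\<integral>x. meas_lik g z zo x * P n r i x \<partial>lborel))"
  have lw: "assoc_lweight V g z m n \<sigma> (P n r)
      = fact (n_clutter m n \<sigma>) / V ^ n_clutter m n \<sigma> * (\<Prod>i<n. h n r i (\<sigma> i))" for n \<sigma> r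
    by (simp add: assoc_lweight_def Let_def h_def)
  have lik: "assoc_lik V g z m n \<sigma> X * assoc_prob pD lam V m n \<sigma>
      = KK n \<sigma> * (\<Prod>i<n. meas_lik g z (\<sigma> i) (X i))" for n \<sigma> X
    by (simp add: assoc_lik_def KK_def Let_def)
  have KKc: "KK n (\<sigma> \<circ> \<nu>) = KK n \<sigma>" if "\<nu> permutes {..<n}" "\<sigma> \<in> assocs m n" for n \<sigma> \<nu>
    using assoc_comp(2)[OF that] by (simp add: KK_def assoc_prob_def)
  have hint0: "integrable lborel (\<lambda>x. meas_lik g z zo x * P n q i x)"
    if "q \<in> H n" "i < n" "\<And>j. zo = Some j \<Longrightarrow> j < m" for n q i zo
  proof (cases zo)
    case None then show ?thesis by (simp add: meas_lik_def Pf)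
  next
    case (Some j)
    then have "j < m" using that by auto
    then show ?thesis using upd_int[OF that(1,2) \<open>j<m\<close>] Some by (simp add: meas_lik_def P_def)
  qed
  have asm: "\<sigma> i = Some j \<Longrightarrow> j < m" if "\<sigma> \<in> assocs m n" for \<sigma> i j n
    using that unfolding assocs_def by (cases "i < n") auto
  have hint: "integrable lborel (\<lambda>x. meas_lik g z (\<sigma> i) x * P n q j x)"
    if "q \<in> H n" "\<sigma> \<in> assocs m n" "j < n" for n q \<sigma> i j
    using hint0[OF that(1,3)] asm[OF that(2)] by blast
  have hpos: "0 < h n q i (\<sigma> i)"
    if "q \<in> H n" "\<sigma> \<in> assocs m n" "i < n" for n q \<sigma> i
  proof (cases "\<sigma> i")
    case None then show ?thesis by (simp add: meas_lik_def Pf h_def)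
  next
    case (Some j)
    then have "j < m" using that unfolding assocs_def by auto
    then show ?thesis using upd_pos[OF that(1,3) \<open>j<m\<close>] Some by (simp add: meas_lik_def P_def h_def)
  qed
  have den: "mt_integral n (\<lambda>X'. mt_lik pD lam V g z m n X' * mt_mix H w P n X')
      = (\<Sum>r\<in>H n. \<Sum>\<sigma>\<in>assocs m n. w n r * assoc_prob pD lam V m n \<sigma> * assoc_lweight V g z m n \<sigma> (P n r))" for n
  proof -
    let ?M = "PiM {..<n} (\<lambda>_. lborel :: 'a measure)"
    let ?T = "\<lambda>\<sigma> r \<mu> X'. \<Prod>i<n. meas_lik g z (\<sigma> i) (X' i) * P n r (inv \<mu> i) (X' i)"
    have expand: "mt_lik pD lam V g z m n X' * mt_mix H w P n X'
      = (\<Sum>\<sigma>\<in>assocs m n. \<Sum>r\<in>H n. \<Sum>\<mu>\<in>perms n. (KK n \<sigma> * w n r) * ?T \<sigma> r \<mu> X')" for X'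
    proof -
      have "mt_lik pD lam V g z m n X' * mt_mix H w P n X'
        = (\<Sum>\<sigma>\<in>assocs m n. \<Sum>r\<in>H n. \<Sum>\<mu>\<in>perms n. (KK n \<sigma> * w n r) * ((\<Prod>i<n. meas_lik g z (\<sigma> i) (X' i)) * (\<Prod>i<n. P n r i (X' (\<mu> i)))))"
        unfolding mt_lik_def mt_mix_def lik by (simp add: sum_distrib_left sum_distrib_right mult_ac) (rule sum.swap)
      also have "\<dots> = (\<Sum>\<sigma>\<in>assocs m n. \<Sum>r\<in>H n. \<Sum>\<mu>\<in>perms n. (KK n \<sigma> * w n r) * ?T \<sigma> r \<mu> X')"
      proof (rule sum.cong[OF refl], rule sum.cong[OF refl], rule sum.cong[OF refl])
        fix \<sigma> r \<mu> assume "\<mu> \<in> perms n"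
        then have mp: "\<mu> permutes {..<n}" by (simp add: perms_def)
        show "(KK n \<sigma> * w n r) * ((\<Prod>i<n. meas_lik g z (\<sigma> i) (X' i)) * (\<Prod>i<n. P n r i (X' (\<mu> i)))) = (KK n \<sigma> * w n r) * ?T \<sigma> r \<mu> X'"
          by (simp add: perm_prod[OF mp, of "\<lambda>i y. P n r i y" X'] prod.distrib)
      qed
      finally show ?thesis .
    qed
    have Ti: "integrable ?M (?T \<sigma> r \<mu>)" if "\<sigma> \<in> assocs m n" "r \<in> H n" "\<mu> \<in> perms n" for \<sigma> r \<mu>
    proof -
      have mp: "\<mu> permutes {..<n}" using that by (simp add: perms_def)
      have "inv \<mu> i < n" if "i < n" for i
        using permutes_in_image[OF permutes_inv[OF mp]] that by auto
      then show ?thesis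
        by (intro pi_prod_int(1)) (auto intro: hint[OF that(2,1)])
    qed
    have Tv: "(\<integral>X'. ?T \<sigma> r \<mu> X' \<partial>?M) = (\<Prod>i<n. h n r (inv \<mu> i) (\<sigma> i))"
      if "\<sigma> \<in> assocs m n" "r \<in> H n" "\<mu> \<in> perms n" for \<sigma> r \<mu>
    proof -
      have mp: "\<mu> permutes {..<n}" using that by (simp add: perms_def)
      have "inv \<mu> i < n" if "i < n" for i
        using permutes_in_image[OF permutes_inv[OF mp]] that by auto
      then show ?thesis
        by (subst pi_prod_int(2)) (auto simp: h_def intro: hint[OF that(2,1)])
    qed
    have "(\<integral>X'. mt_lik pD lam V g z m n X' * mt_mix H w P n X' \<partial>?M)
      = (\<Sum>\<sigma>\<in>assocs m n. \<Sum>r\<in>H n. \<Sum>\<mu>\<in>perms n. (KK n \<sigma> * w n r) * (\<Prod>i<n. h n r (inv \<mu> i) (\<sigma> i)))"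
      unfolding expand
      by (subst integral_sum3) (auto intro!: Ti sum.cong simp: Tv)
    also have "\<dots> = (\<Sum>\<sigma>\<in>assocs m n. \<Sum>r\<in>H n. \<Sum>\<mu>\<in>perms n. (KK n \<sigma> * w n r) * (\<Prod>i<n. h n r i ((\<sigma> \<circ> \<mu>) i)))"
    proof (rule sum.cong[OF refl], rule sum.cong[OF refl], rule sum.cong[OF refl])
      fix \<sigma> r \<mu> assume "\<mu> \<in> perms n"
      then have mp: "\<mu> permutes {..<n}" by (simp add: perms_def)
      show "(KK n \<sigma> * w n r) * (\<Prod>i<n. h n r (inv \<mu> i) (\<sigma> i)) = (KK n \<sigma> * w n r) * (\<Prod>i<n. h n r i ((\<sigma> \<circ> \<mu>) i))"
        using perm_prod[OF mp, of "\<lambda>i y. h n r i y" \<sigma>] by simp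
    qed
    also have "\<dots> = (\<Sum>r\<in>H n. \<Sum>\<mu>\<in>perms n. \<Sum>\<sigma>\<in>assocs m n. (KK n \<sigma> * w n r) * (\<Prod>i<n. h n r i ((\<sigma> \<circ> \<mu>) i)))"
      by (subst sum.swap) (rule sum.cong[OF refl], rule sum.swap)
    also have "\<dots> = (\<Sum>r\<in>H n. \<Sum>\<mu>\<in>perms n. \<Sum>\<sigma>\<in>assocs m n. (KK n \<sigma> * w n r) * (\<Prod>i<n. h n r i (\<sigma> i)))"
    proof (rule sum.cong[OF refl], rule sum.cong[OF refl])
      fix r \<mu> assume "\<mu> \<in> perms n"
      then have mp: "\<mu> permutes {..<n}" by (simp add: perms_def)
      have "(\<Sum>\<sigma>\<in>assocs m n. (KK n \<sigma> * w n r) * (\<Prod>i<n. h n r i ((\<sigma> \<circ> \<mu>) i)))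
          = (\<Sum>\<sigma>\<in>assocs m n. (KK n (\<sigma> \<circ> \<mu>) * w n r) * (\<Prod>i<n. h n r i ((\<sigma> \<circ> \<mu>) i)))"
        by (rule sum.cong[OF refl]) (simp add: KKc[OF mp])
      also have "\<dots> = (\<Sum>\<sigma>\<in>assocs m n. (KK n \<sigma> * w n r) * (\<Prod>i<n. h n r i (\<sigma> i)))"
        by (rule assoc_sum_comp[OF mp, where F = "\<lambda>\<sigma>. (KK n \<sigma> * w n r) * (\<Prod>i<n. h n r i (\<sigma> i))"])
      finally show "(\<Sum>\<sigma>\<in>assocs m n. (KK n \<sigma> * w n r) * (\<Prod>i<n. h n r i ((\<sigma> \<circ> \<mu>) i)))
          = (\<Sum>\<sigma>\<in>assocs m n. (KK n \<sigma> * w n r) * (\<Prod>i<n. h n r i (\<sigma> i)))" .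
    qed
    also have "\<dots> = fact n * (\<Sum>r\<in>H n. \<Sum>\<sigma>\<in>assocs m n. w n r * assoc_prob pD lam V m n \<sigma> * assoc_lweight V g z m n \<sigma> (P n r))"
      by (simp add: card_perms sum_distrib_left lw KK_def mult_ac)
    finally show ?thesis
      unfolding mt_integral_def by simp
  qed
  show ?thesis
  proof (intro conjI allI)
    fix n X
    show "mt_predict tr (mt_mix H w f) n X = mt_mix H w (\<lambda>n q i. st_predict tr (f n q i)) n X"
      by (rule part1) (rule pred_int)
  next
    fix n :: nat and X :: "nat \<Rightarrow> 'a"
    define D where "D = (\<Sum>n'. \<Sum>r\<in>H n'. \<Sum>\<nu>\<in>assocs m n'. w n' r * assoc_prob pD lam V m n' \<nu> * assoc_lweight V g z m n' \<nu> (P n' r))"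
    let ?U = "\<lambda>q \<sigma> \<nu>. \<Prod>i<n. meas_lik g z (\<sigma> i) (X (\<nu> i)) * P n q i (X (\<nu> i))"
    have LHS: "mt_bayes (mt_lik pD lam V g z m) (mt_predict tr (mt_mix H w f)) n X
        = mt_lik pD lam V g z m n X * mt_mix H w P n X / D"
      unfolding mt_bayes_def pred_eq D_def by (simp add: den)
    have num: "mt_lik pD lam V g z m n X * mt_mix H w P n X
        = (\<Sum>q\<in>H n. \<Sum>\<sigma>\<in>assocs m n. \<Sum>\<nu>\<in>perms n. KK n \<sigma> * (w n q * ?U q \<sigma> \<nu>))"
    proof -
      have "mt_lik pD lam V g z m n X * mt_mix H w P n X
        = (\<Sum>q\<in>H n. \<Sum>\<sigma>\<in>assocs m n. \<Sum>\<nu>\<in>perms n. KK n \<sigma> * (w n q * ((\<Prod>i<n. meas_lik g z (\<sigma> i) (X i)) * (\<Prod>i<n. P n q i (X (\<nu> i))))))"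
        unfolding mt_lik_def mt_mix_def lik by (simp add: sum_distrib_left sum_distrib_right mult_ac)
      also have "\<dots> = (\<Sum>q\<in>H n. \<Sum>\<sigma>\<in>assocs m n. \<Sum>\<nu>\<in>perms n. KK n \<sigma> * (w n q * ?U q (\<sigma> \<circ> \<nu>) \<nu>))"
      proof (rule sum.cong[OF refl], rule sum.cong[OF refl], rule sum.cong[OF refl])
        fix q \<sigma> \<nu> assume "\<nu> \<in> perms n"
        then have mp: "\<nu> permutes {..<n}" by (simp add: perms_def)
        have "(\<Prod>i<n. meas_lik g z (\<sigma> i) (X i)) = (\<Prod>i<n. meas_lik g z (\<sigma> (\<nu> i)) (X (\<nu> i)))"
          using prod.permute[OF mp, of "\<lambda>i. meas_lik g z (\<sigma> i) (X i)"] by (simp add: o_def)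
        then show "KK n \<sigma> * (w n q * ((\<Prod>i<n. meas_lik g z (\<sigma> i) (X i)) * (\<Prod>i<n. P n q i (X (\<nu> i)))))
          = KK n \<sigma> * (w n q * ?U q (\<sigma> \<circ> \<nu>) \<nu>)"
          by (simp add: prod.distrib)
      qed
      also have "\<dots> = (\<Sum>q\<in>H n. \<Sum>\<nu>\<in>perms n. \<Sum>\<sigma>\<in>assocs m n. KK n \<sigma> * (w n q * ?U q (\<sigma> \<circ> \<nu>) \<nu>))"
        by (rule sum.cong[OF refl], rule sum.swap)
      also have "\<dots> = (\<Sum>q\<in>H n. \<Sum>\<nu>\<in>perms n. \<Sum>\<sigma>\<in>assocs m n. KK n \<sigma> * (w n q * ?U q \<sigma> \<nu>))"
      proof (rule sum.cong[OF refl], rule sum.cong[OF refl])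
        fix q \<nu> assume "\<nu> \<in> perms n"
        then have mp: "\<nu> permutes {..<n}" by (simp add: perms_def)
        have "(\<Sum>\<sigma>\<in>assocs m n. KK n \<sigma> * (w n q * ?U q (\<sigma> \<circ> \<nu>) \<nu>))
            = (\<Sum>\<sigma>\<in>assocs m n. KK n (\<sigma> \<circ> \<nu>) * (w n q * ?U q (\<sigma> \<circ> \<nu>) \<nu>))"
          by (rule sum.cong[OF refl]) (simp add: KKc[OF mp])
        also have "\<dots> = (\<Sum>\<sigma>\<in>assocs m n. KK n \<sigma> * (w n q * ?U q \<sigma> \<nu>))"
          by (rule assoc_sum_comp[OF mp, where F = "\<lambda>\<sigma>. KK n \<sigma> * (w n q * ?U q \<sigma> \<nu>)"])
        finally show "(\<Sum>\<sigma>\<in>assocs m n. KK n \<sigma> * (w n q * ?U q (\<sigma> \<circ> \<nu>) \<nu>))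
            = (\<Sum>\<sigma>\<in>assocs m n. KK n \<sigma> * (w n q * ?U q \<sigma> \<nu>))" .
      qed
      also have "\<dots> = (\<Sum>q\<in>H n. \<Sum>\<sigma>\<in>assocs m n. \<Sum>\<nu>\<in>perms n. KK n \<sigma> * (w n q * ?U q \<sigma> \<nu>))"
        by (rule sum.cong[OF refl], rule sum.swap)
      finally show ?thesis .
    qed
    have trm: "(w n q * assoc_prob pD lam V m n \<sigma> * assoc_lweight V g z m n \<sigma> (P n q) / D)
          * (\<Sum>\<nu>\<in>perms n. \<Prod>i<n. st_update g z (\<sigma> i) (P n q i) (X (\<nu> i)))
        = (\<Sum>\<nu>\<in>perms n. KK n \<sigma> * (w n q * ?U q \<sigma> \<nu>)) / D"
      if "q \<in> H n" "\<sigma> \<in> assocs m n" for q \<sigma>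
    proof -
      let ?C = "\<Prod>i<n. h n q i (\<sigma> i)"
      have Cpos: "?C > 0" by (rule prod_pos) (use hpos[OF that] in auto)
      have su: "(\<Prod>i<n. st_update g z (\<sigma> i) (P n q i) (X (\<nu> i))) = ?U q \<sigma> \<nu> / ?C" for \<nu>
        unfolding st_update_def h_def by (simp add: prod_dividef)
      have e1: "(\<Sum>\<nu>\<in>perms n. \<Prod>i<n. st_update g z (\<sigma> i) (P n q i) (X (\<nu> i)))
          = (\<Sum>\<nu>\<in>perms n. ?U q \<sigma> \<nu>) / ?C"
        by (simp add: su sum_divide_distrib)
      have e2: "(\<Sum>\<nu>\<in>perms n. KK n \<sigma> * (w n q * ?U q \<sigma> \<nu>)) = KK n \<sigma> * w n q * (\<Sum>\<nu>\<in>perms n. ?U q \<sigma> \<nu>)"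
        by (simp add: sum_distrib_left mult_ac)
      have gen: "(w * b * (a * C) / D) * (S / C) = (a * b) * w * S / D" if "C \<noteq> 0" for w b a C D S :: real
        using that by (cases "D = 0") (simp_all add: field_simps)
      have e3: "(w n q * assoc_prob pD lam V m n \<sigma> * (fact (n_clutter m n \<sigma>) / V ^ n_clutter m n \<sigma> * ?C) / D)
           * ((\<Sum>\<nu>\<in>perms n. ?U q \<sigma> \<nu>) / ?C)
          = KK n \<sigma> * w n q * (\<Sum>\<nu>\<in>perms n. ?U q \<sigma> \<nu>) / D"
        unfolding KK_def by (rule gen) (use Cpos in linarith)
      show ?thesis
        by (simp only: lw e1 e2 e3)
    qed
    have "(\<Sum>q\<in>H n. \<Sum>\<sigma>\<in>assocs m n.
            (w n q * assoc_prob pD lam V m n \<sigma> * assoc_lweight V g z m n \<sigma> (P n q) / D)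
              * (\<Sum>\<nu>\<in>perms n. \<Prod>i<n. st_update g z (\<sigma> i) (P n q i) (X (\<nu> i))))
        = (\<Sum>q\<in>H n. \<Sum>\<sigma>\<in>assocs m n. (\<Sum>\<nu>\<in>perms n. KK n \<sigma> * (w n q * ?U q \<sigma> \<nu>)) / D)"
      by (rule sum.cong[OF refl], rule sum.cong[OF refl]) (rule trm)
    also have "\<dots> = mt_bayes (mt_lik pD lam V g z m) (mt_predict tr (mt_mix H w f)) n X"
      unfolding LHS num by (simp add: sum_divide_distrib)
    finally have res: "mt_bayes (mt_lik pD lam V g z m) (mt_predict tr (mt_mix H w f)) n X
       = (\<Sum>q\<in>H n. \<Sum>\<sigma>\<in>assocs m n.
            (w n q * assoc_prob pD lam V m n \<sigma> * assoc_lweight V g z m n \<sigma> (P n q)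
              / (\<Sum>n'. \<Sum>r\<in>H n'. \<Sum>\<nu>\<in>assocs m n'. w n' r * assoc_prob pD lam V m n' \<nu> * assoc_lweight V g z m n' \<nu> (P n' r)))
              * (\<Sum>\<nu>\<in>perms n. \<Prod>i<n. st_update g z (\<sigma> i) (P n q i) (X (\<nu> i))))"
      unfolding D_def by simp
    then show "mt_bayes (mt_lik pD lam V g z m) (mt_predict tr (mt_mix H w f)) n X
            = (\<Sum>q\<in>H n. \<Sum>\<sigma>\<in>assocs m n.
                 (w n q * assoc_prob pD lam V m n \<sigma>
                    * assoc_lweight V g z m n \<sigma> (\<lambda>i. st_predict tr (f n q i))
                  / (\<Sum>n'. \<Sum>r\<in>H n'. \<Sum>\<nu>\<in>assocs m n'.
                       w n' r * assoc_prob pD lam V m n' \<nu>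
                         * assoc_lweight V g z m n' \<nu> (\<lambda>i. st_predict tr (f n' r i))))
                 * (\<Sum>\<nu>\<in>perms n. \<Prod>i<n.
                      st_update g z (\<sigma> i) (st_predict tr (f n q i)) (X (\<nu> i))))"
      by (simp only: P_def)
  qed
qed

end
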